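(* For every integer $n\ge 1$, the element $$g_n=s^nas^{-n}\,t^nat^{-2n}at^n\in G$$ satisfies $d_{\mathcal A}(1,g_n)\ge 6n$. Equivalently, if $g\in G$ has normal form $g=c_{(-n,0)}c_{(0,n)}c_{(0,-n)}$ (i.e. lamplighter position $(0,0)$ and lit lamps exactly $\{(0,n),(0,-n),(-n,0)\}$), then $d_{\mathcal A}(1,g)\ge 6n$.
   Context: $G=\langle a,s,t \mid a^2=1,\ [a,a^t]=1,\ [s,t]=1,\ a^s=aa^t\rangle$, where $[x,y]=x^{-1}y^{-1}xy$ and $x^y=y^{-1}xy$. $\mathcal A=\{a,s,t,at,ta,ata,as,sa,asa\}$ and $d_{\mathcal A}$ is the word metric on $G$ with respect to $\mathcal A$. For $j\in\mathbb Z$ let $c_{(0,j)}=t^{-j}at^{j}$ and for $i<0$ let $c_{(i,0)}=s^{-i}as^{i}$; one has $g_n=c_{(-n,0)}c_{(0,-n)}c_{(0,n)}$, and these three elements commute. *)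

theory Defs
  imports Main
begin

text \<open>The group G = < a,s,t | a^2, [a,a^t], [s,t], a^s = a a^t > presented as
  words in the letters a,s,t and their inverses, modulo the congruence generated by
  free cancellation and the relators.\<close>

datatype gen = Ga | Gs | Gt

type_synonym word = "(gen \<times> bool) list"   \<comment> \<open>(x, True) = x, (x, False) = x^-1\<close>

definition wa :: word where "wa = [(Ga, True)]"
definition wai :: word where "wai = [(Ga, False)]"
definition ws :: word where "ws = [(Gs, True)]"
definition wsi :: word where "wsi = [(Gs, False)]"
definition wt :: word where "wt = [(Gt, True)]"
definition wti :: word where "wti = [(Gt, False)]"

fun winv :: "word \<Rightarrow> word" where
  "winv [] = []"
| "winv ((x, b) # w) = winv w @ [(x, \<not> b)]"

definition wpow :: "word \<Rightarrow> nat \<Rightarrow> word" where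
  "wpow w n = concat (replicate n w)"

text \<open>Relators r (relation r = 1), with [x,y] = x^-1 y^-1 x y and x^y = y^-1 x y.\<close>
definition relators :: "word set" where
  "relators = {
     wa @ wa,
     wai @ winv (wti @ wa @ wt) @ wa @ (wti @ wa @ wt),
     wsi @ wti @ ws @ wt,
     (wsi @ wa @ ws) @ winv (wa @ wti @ wa @ wt) }"

inductive eqvG :: "word \<Rightarrow> word \<Rightarrow> bool" where
  refl: "eqvG u u"
| sym: "eqvG u v \<Longrightarrow> eqvG v u"
| trans: "eqvG u v \<Longrightarrow> eqvG v w \<Longrightarrow> eqvG u w"
| ctxt: "eqvG u v \<Longrightarrow> eqvG (p @ u @ q) (p @ v @ q)"
| cancel: "eqvG [(x, b), (x, \<not> b)] []"
| rel: "r \<in> relators \<Longrightarrow> eqvG r []"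

definition genA :: "word set" where
  "genA = {wa, ws, wt, wa @ wt, wt @ wa, wa @ wt @ wa, wa @ ws, ws @ wa, wa @ ws @ wa}"

definition genAsym :: "word set" where
  "genAsym = genA \<union> winv ` genA"

definition dA1 :: "word \<Rightarrow> nat" where
  "dA1 g = (LEAST k. \<exists>us. length us = k \<and> set us \<subseteq> genAsym \<and> eqvG (concat us) g)"

definition gword :: "nat \<Rightarrow> word" where
  "gword n = wpow ws n @ wa @ wpow wsi n @ wpow wt n @ wa @ wpow wti (2 * n) @ wa @ wpow wt n"

end

theory Submission
  imports Defs
begin

fun stp :: "gen \<times> bool \<Rightarrow> int \<times> int" where
  "stp (Ga, b) = (0, 0)"
| "stp (Gs, b) = (if b then 1 else -1, 0)"
| "stp (Gt, b) = (0, if b then 1 else -1)"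

fun pos :: "word \<Rightarrow> int \<times> int" where
  "pos [] = (0, 0)"
| "pos (x # w) = (fst (stp x) + fst (pos w), snd (stp x) + snd (pos w))"

fun val :: "(int \<Rightarrow> int \<Rightarrow> bool) \<Rightarrow> word \<Rightarrow> bool" where
  "val l [] = False"
| "val l (x # w) = ((fst x = Ga \<and> l 0 0) \<noteq> val (\<lambda>p q. l (p + fst (stp x)) (q + snd (stp x))) w)"

definition adm :: "(int \<Rightarrow> int \<Rightarrow> bool) \<Rightarrow> bool" where
  "adm l = (\<forall>p q. l (p - 1) q = (l p q \<noteq> l p (q - 1)))"

lemma pos_append: "pos (u @ v) = (fst (pos u) + fst (pos v), snd (pos u) + snd (pos v))"
  by (induction u) auto

lemma val_append:
  "val l (u @ v) = (val l u \<noteq> val (\<lambda>p q. l (p + fst (pos u)) (q + snd (pos u))) v)"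
proof (induction u arbitrary: l)
  case Nil
  then show ?case by simp
next
  case (Cons x u)
  have e: "(\<lambda>p q. l (p + (fst (stp x) + fst (pos u))) (q + (snd (stp x) + snd (pos u))))
     = (\<lambda>p q. l (p + fst (pos u) + fst (stp x)) (q + snd (pos u) + snd (stp x)))"
    by (simp add: algebra_simps)
  show ?case by (simp add: Cons e) blast
qed

lemma adm_shift: "adm l \<Longrightarrow> adm (\<lambda>p q. l (p + a) (q + b))"
  unfolding adm_def
proof (intro allI)
  fix p q
  assume "\<forall>p q. l (p - 1) q = (l p q \<noteq> l p (q - 1))"
  then have "l (p + a - 1) (q + b) = (l (p + a) (q + b) \<noteq> l (p + a) (q + b - 1))" by blast
  then show "l (p - 1 + a) (q + b) = (l (p + a) (q + b) \<noteq> l (p + a) (q - 1 + b))"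
    by (simp add: algebra_simps)
qed

lemma adm_rel: "adm l \<Longrightarrow> l (-1) 0 = (l 0 0 \<noteq> l 0 (-1))"
  unfolding adm_def by (metis diff_0)

lemma inv_basic:
  "eqvG u v \<Longrightarrow> pos u = pos v \<and> (\<forall>l. adm l \<longrightarrow> val l u = val l v)"
proof (induction rule: eqvG.induct)
  case (refl u)
  then show ?case by simp
next
  case (sym u v)
  then show ?case by simp
next
  case (trans u v w)
  then show ?case by simp
next
  case (ctxt u v p q)
  then show ?case
    by (simp add: pos_append val_append adm_shift)
next
  case (cancel x b)
  then show ?case by (cases x) auto
next
  case (rel r)
  then show ?case
    by (auto simp: relators_def wa_def wai_def ws_def wsi_def wt_def wti_def adm_rel)
qed

definition bp :: "int \<Rightarrow> nat \<Rightarrow> bool" where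
  "bp m k = odd (if 0 \<le> m then nat m choose k else nat (int k - m - 1) choose k)"

lemma bp_pascal: "bp (m + 1) (Suc k) = (bp m (Suc k) \<noteq> bp m k)"
proof -
  consider "0 \<le> m" | "m = -1" | "m \<le> -2" by linarith
  then show ?thesis
  proof cases
    case 1
    then have "nat (m + 1) = Suc (nat m)" by simp
    with 1 show ?thesis by (simp add: bp_def) blast
  next
    case 2
    have "nat (1 + int k) = Suc k" by simp
    with 2 show ?thesis by (simp add: bp_def)
  next
    case 3
    define N where "N = nat (int k - m - 1)"
    have a: "nat (int (Suc k) - (m + 1) - 1) = N" unfolding N_def by simp
    have b: "nat (int (Suc k) - m - 1) = Suc N" unfolding N_def using 3 by simp
    from 3 have "\<not> 0 \<le> m + 1" "\<not> 0 \<le> m" by auto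
    then show ?thesis unfolding bp_def a b N_def[symmetric]
      by simp blast
  qed
qed

definition E :: "int \<Rightarrow> int \<Rightarrow> bool" where
  "E p q = (0 \<le> q \<and> bp (- p) (nat q))"

lemma adm_E: "adm E"
  unfolding adm_def
proof (intro allI)
  fix p q :: int
  consider "q < 0" | "q = 0" | "q \<ge> 1" by linarith
  then show "E (p - 1) q = (E p q \<noteq> E p (q - 1))"
  proof cases
    case 1 then show ?thesis by (simp add: E_def)
  next
    case 2 then show ?thesis by (simp add: E_def bp_def)
  next
    case 3
    define k where "k = nat (q - 1)"
    have k: "nat q = Suc k" "nat (q - 1) = k" using 3 unfolding k_def by auto
    have "- (p - 1) = - p + 1" by simp
    then show ?thesis using 3 k bp_pascal[of "-p" k] by (simp add: E_def)
  qed
qed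


lemma val_noa: "(\<forall>x\<in>set w. fst x \<noteq> Ga) \<Longrightarrow> \<not> val l w"
proof (induction w arbitrary: l)
  case Nil then show ?case by simp
next
  case (Cons x w) then show ?case by simp
qed

lemma wpow_Suc: "wpow w (Suc k) = w @ wpow w k"
  by (simp add: wpow_def)

lemma pos_wpow: "pos (wpow w k) = (int k * fst (pos w), int k * snd (pos w))"
  by (induction k) (auto simp: wpow_def pos_append algebra_simps)

lemma set_wpow: "set (wpow w k) \<subseteq> set w"
  by (auto simp: wpow_def)

lemma val_wpow: "w \<in> {ws, wsi, wt, wti} \<Longrightarrow> \<not> val l (wpow w k)"
  apply (rule val_noa)
  using set_wpow[of w k] by (auto simp: ws_def wsi_def wt_def wti_def)

lemma pos_gword: "pos (gword n) = (0, 0)"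
  by (simp add: gword_def pos_append pos_wpow ws_def wsi_def wt_def wti_def wa_def)

lemma val_gword: "val l (gword n) = (l (int n) 0 \<noteq> (l 0 (int n) \<noteq> l 0 (- int n)))"
  by (simp add: gword_def val_append pos_append pos_wpow val_wpow ws_def wsi_def wt_def wti_def wa_def)


definition dd :: "int \<times> int \<Rightarrow> int \<times> int \<Rightarrow> int" where
  "dd x y = \<bar>fst x - fst y\<bar> + \<bar>snd x - snd y\<bar>"

lemma gen_facts:
  assumes "u \<in> genAsym"
  shows "dd (0,0) (pos u) \<le> 1 \<and> (\<forall>l. \<not> l 0 0 \<longrightarrow> \<not> l (fst (pos u)) (snd (pos u)) \<longrightarrow> \<not> val l u)"
  using assms
  by (auto simp: genAsym_def genA_def dd_def wa_def ws_def wt_def)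

definition P :: "word list \<Rightarrow> nat \<Rightarrow> int \<times> int" where
  "P us i = pos (concat (take i us))"

lemma path_val:
  "set us \<subseteq> genAsym \<Longrightarrow> (\<forall>i\<le>length us. \<not> l (fst (P us i)) (snd (P us i))) \<Longrightarrow> \<not> val l (concat us)"
proof (induction us arbitrary: l)
  case Nil
  then show ?case by simp
next
  case (Cons u us)
  have g: "u \<in> genAsym" using Cons.prems by simp
  have h0: "\<not> l 0 0" using Cons.prems(2)[rule_format, of 0] by (simp add: P_def)
  have h1: "\<not> l (fst (pos u)) (snd (pos u))"
    using Cons.prems(2)[rule_format, of 1] by (simp add: P_def)
  have vu: "\<not> val l u" using gen_facts[OF g] h0 h1 by blast
  have "\<not> val (\<lambda>p q. l (p + fst (pos u)) (q + snd (pos u))) (concat us)"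
  proof (rule Cons.IH)
    show "set us \<subseteq> genAsym" using Cons.prems by simp
    show "\<forall>i\<le>length us. \<not> l (fst (P us i) + fst (pos u)) (snd (P us i) + snd (pos u))"
    proof (intro allI impI)
      fix i assume "i \<le> length us"
      then have "\<not> l (fst (P (u # us) (Suc i))) (snd (P (u # us) (Suc i)))"
        using Cons.prems(2) by simp
      then show "\<not> l (fst (P us i) + fst (pos u)) (snd (P us i) + snd (pos u))"
        by (simp add: P_def pos_append add.commute)
    qed
  qed
  then show ?case using vu by (simp add: val_append)
qed

lemma path_dist:
  assumes "set us \<subseteq> genAsym" "i \<le> j" "j \<le> length us"
  shows "dd (P us i) (P us j) \<le> int (j - i)"
  using assms(2,3)
proof (induction j)
  case 0
  then show ?case by (simp add: dd_def)
next
  case (Suc j)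
  show ?case
  proof (cases "i = Suc j")
    case True
    then show ?thesis by (simp add: dd_def)
  next
    case False
    then have ij: "i \<le> j" using Suc.prems by simp
    have IH: "dd (P us i) (P us j) \<le> int (j - i)" using Suc.IH ij Suc.prems by simp
    have jl: "j < length us" using Suc.prems by simp
    then have g: "us ! j \<in> genAsym" using assms(1) nth_mem by blast
    have t: "take (Suc j) us = take j us @ [us ! j]" using jl by (simp add: take_Suc_conv_app_nth)
    have e: "P us (Suc j) = (fst (P us j) + fst (pos (us ! j)), snd (P us j) + snd (pos (us ! j)))"
      by (simp add: P_def t pos_append)
    have "dd (0,0) (pos (us ! j)) \<le> 1" using gen_facts[OF g] by blast
    then show ?thesis using IH ij e by (simp add: dd_def)
  qed
qed


lemma geo:
  fixes n :: int and A B C X Y Z :: "int \<times> int"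
  assumes "n \<le> snd A" "n \<le> fst B" "fst C + snd C \<le> - n"
    and "(X = A \<and> Y = B \<and> Z = C) \<or> (X = A \<and> Y = C \<and> Z = B) \<or> (X = B \<and> Y = A \<and> Z = C)
    \<or> (X = B \<and> Y = C \<and> Z = A) \<or> (X = C \<and> Y = A \<and> Z = B) \<or> (X = C \<and> Y = B \<and> Z = A)"
  shows "6 * n \<le> dd (0,0) X + dd X Y + dd Y Z + dd Z (0,0)"
  using assms(4)
proof (elim disjE)
qed (use assms(1-3) in \<open>auto simp: dd_def\<close>)


lemma adm_A: "adm (\<lambda>p q. E p (q - c))"
  using adm_shift[OF adm_E, of 0 "-c"] by simp

lemma adm_B: "adm (\<lambda>p q. E q (p - c))"
  unfolding adm_def
proof (intro allI)
  fix p q :: int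
  have h: "E (q - 1) (p - c) = (E q (p - c) \<noteq> E q (p - c - 1))"
    using adm_E unfolding adm_def by blast
  have e: "p - 1 - c = p - c - 1" by simp
  show "E q (p - 1 - c) = (E q (p - c) \<noteq> E (q - 1) (p - c))" unfolding e using h by auto
qed

lemma adm_C: "adm (\<lambda>p q. E q (- p - q - c))"
  unfolding adm_def
proof (intro allI)
  fix p q :: int
  have "E (q - 1) (- p - q - c + 1) = (E q (- p - q - c + 1) \<noteq> E q (- p - q - c))"
    using adm_E unfolding adm_def by (metis add_diff_cancel_right')
  then show "E q (- (p - 1) - q - c) = (E q (- p - q - c) \<noteq> E (q - 1) (- p - (q - 1) - c))"
    by (simp add: algebra_simps) (metis add.commute)
qed

lemma exists_rep: "\<exists>us. length us = 6 * n + 3 \<and> set us \<subseteq> genAsym \<and> eqvG (concat us) (gword n)"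
proof -
  define us where "us = replicate n ws @ [wa] @ replicate n wsi @ replicate n wt @ [wa]
     @ replicate (2 * n) wti @ [wa] @ replicate n wt"
  have "wsi = winv ws" "wti = winv wt" by (simp_all add: wsi_def ws_def wti_def wt_def)
  then have "set us \<subseteq> genAsym" unfolding us_def genAsym_def genA_def by auto
  moreover have "concat us = gword n" by (simp add: us_def gword_def wpow_def)
  moreover have "length us = 6 * n + 3" by (simp add: us_def)
  ultimately show ?thesis by (metis eqvG.refl)
qed

lemma order_bound:
  assumes "set us \<subseteq> genAsym" "a \<le> b" "b \<le> c" "c \<le> length us"
  shows "dd (P us 0) (P us a) + dd (P us a) (P us b) + dd (P us b) (P us c) + dd (P us c) (P us (length us))
     \<le> int (length us)"
proof -
  have "dd (P us 0) (P us a) \<le> int (a - 0)" by (rule path_dist) (use assms in auto)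
  moreover have "dd (P us a) (P us b) \<le> int (b - a)" by (rule path_dist) (use assms in auto)
  moreover have "dd (P us b) (P us c) \<le> int (c - b)" by (rule path_dist) (use assms in auto)
  moreover have "dd (P us c) (P us (length us)) \<le> int (length us - c)" by (rule path_dist) (use assms in auto)
  ultimately show ?thesis using assms by linarith
qed

lemma dd_sym: "dd x y = dd y x"
  by (simp add: dd_def abs_minus_commute)

theorem mainTheorem6:
  fixes n :: nat
  assumes "n \<ge> 1"
  shows "dA1 (gword n) \<ge> 6 * n"
proof -
  let ?R = "\<lambda>k. \<exists>us. length us = k \<and> set us \<subseteq> genAsym \<and> eqvG (concat us) (gword n)"
  obtain k0 where "?R k0" using exists_rep by blast
  then have "?R (dA1 (gword n))" unfolding dA1_def by (rule LeastI)
  then obtain us where us: "length us = dA1 (gword n)" "set us \<subseteq> genAsym" "eqvG (concat us) (gword n)"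
    by blast
  define k where "k = length us"
  have inv: "pos (concat us) = (0, 0)" "\<And>l. adm l \<Longrightarrow> val l (concat us) = val l (gword n)"
    using inv_basic[OF us(3)] pos_gword by auto
  have P0: "P us 0 = (0,0)" by (simp add: P_def)
  have Pk: "P us k = (0,0)" using inv(1) by (simp add: P_def k_def)
  have "\<exists>i\<le>k. int n \<le> snd (P us i)"
  proof (rule ccontr)
    assume "\<not> ?thesis"
    then have "\<not> val (\<lambda>p q. E p (q - int n)) (concat us)"
      by (intro path_val[OF us(2)]) (auto simp: E_def k_def)
    moreover have "val (\<lambda>p q. E p (q - int n)) (concat us)"
      using inv(2)[OF adm_A] assms by (simp add: val_gword E_def bp_def)
    ultimately show False by blast
  qed
  then obtain i where i: "i \<le> k" "int n \<le> snd (P us i)" by blast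
  have "\<exists>i\<le>k. int n \<le> fst (P us i)"
  proof (rule ccontr)
    assume "\<not> ?thesis"
    then have "\<not> val (\<lambda>p q. E q (p - int n)) (concat us)"
      by (intro path_val[OF us(2)]) (auto simp: E_def k_def)
    moreover have "val (\<lambda>p q. E q (p - int n)) (concat us)"
      using inv(2)[OF adm_B] assms by (simp add: val_gword E_def bp_def)
    ultimately show False by blast
  qed
  then obtain j where j: "j \<le> k" "int n \<le> fst (P us j)" by blast
  have "\<exists>i\<le>k. fst (P us i) + snd (P us i) \<le> - int n"
  proof (rule ccontr)
    assume "\<not> ?thesis"
    then have "\<not> val (\<lambda>p q. E q (- p - q - int n)) (concat us)"
      by (intro path_val[OF us(2)]) (auto simp: E_def k_def)
    moreover have "val (\<lambda>p q. E q (- p - q - int n)) (concat us)"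
      using inv(2)[OF adm_C] assms by (simp add: val_gword E_def bp_def)
    ultimately show False by blast
  qed
  then obtain m where m: "m \<le> k" "fst (P us m) + snd (P us m) \<le> - int n" by blast
  have key: "6 * int n \<le> int k"
    if "a \<le> b" "b \<le> c" "c \<le> k"
      "(P us a = P us i \<and> P us b = P us j \<and> P us c = P us m) \<or>
       (P us a = P us i \<and> P us b = P us m \<and> P us c = P us j) \<or>
       (P us a = P us j \<and> P us b = P us i \<and> P us c = P us m) \<or>
       (P us a = P us j \<and> P us b = P us m \<and> P us c = P us i) \<or>
       (P us a = P us m \<and> P us b = P us i \<and> P us c = P us j) \<or>
       (P us a = P us m \<and> P us b = P us j \<and> P us c = P us i)" for a b c
  proof -
    have "6 * int n \<le> dd (0,0) (P us a) + dd (P us a) (P us b) + dd (P us b) (P us c) + dd (P us c) (0,0)"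
      by (rule geo[OF i(2) j(2) m(2)]) (use that(4) in blast)
    also have "\<dots> \<le> int k"
      using order_bound[OF us(2) that(1,2)] that(3) P0 Pk by (simp add: k_def)
    finally show ?thesis .
  qed
  have "6 * int n \<le> int k"
  proof -
    consider "i \<le> j" "j \<le> m" | "i \<le> m" "m \<le> j" | "j \<le> i" "i \<le> m" | "j \<le> m" "m \<le> i"
      | "m \<le> i" "i \<le> j" | "m \<le> j" "j \<le> i" by linarith
    then show ?thesis
    proof cases
      case 1 then show ?thesis using key[of i j m] i j m by auto
    next
      case 2 then show ?thesis using key[of i m j] i j m by auto
    next
      case 3 then show ?thesis using key[of j i m] i j m by auto
    next
      case 4 then show ?thesis using key[of j m i] i j m by auto
    next
      case 5 then show ?thesis using key[of m i j] i j m by auto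
    next
      case 6 then show ?thesis using key[of m j i] i j m by auto
    qed
  qed
  then show ?thesis using us(1) k_def by linarith
qed

end
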